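(* Let $k\ge 2$ and $1\le l_1\le l_2\le\cdots\le l_k$ be integers. If the generalized theta graph $\Theta_{l_1,l_2,\dots,l_k}$ is cyclically orderable, then $$\frac{\sum_{i=1}^{t} l_i}{t-1}\ \ge\ \frac{\sum_{i=1}^{k} l_i}{k-1}$$ for every integer $t$ with $2\le t\le k$.
   Context: The generalized theta graph $\Theta_{l_1,\dots,l_k}$ (with $l_1\le\cdots\le l_k$) is the graph obtained by joining two distinct vertices by $k$ internally vertex-disjoint paths of lengths $l_1,l_2,\dots,l_k$. A cyclic base ordering (CBO) of a connected graph $G$ is a bijection $\mathcal{O}:E(G)\to\{1,\dots,|E(G)|\}$ such that for every $i\in\{1,\dots,|E(G)|\}$ the edges $\mathcal{O}^{-1}(i),\dots,\mathcal{O}^{-1}(i+|V(G)|-2)$ (indices taken cyclically modulo $|E(G)|$) induce a spanning tree of $G$; $G$ is cyclically orderable if it has a CBO. *)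

theory Defs
  imports Complex_Main
begin

text \<open>Finite multigraphs: vertex set V, edge set E, and an endpoint map
  ends assigning to each edge its (unordered) pair of endpoints.
  Parallel edges are allowed (needed when several l_i equal 1).\<close>

definition adj_in :: "('e \<Rightarrow> 'v set) \<Rightarrow> 'e set \<Rightarrow> 'v \<Rightarrow> 'v \<Rightarrow> bool" where
  "adj_in ends F x y \<longleftrightarrow> (\<exists>e\<in>F. ends e = {x, y})"

definition spanning_tree :: "'v set \<Rightarrow> ('e \<Rightarrow> 'v set) \<Rightarrow> 'e set \<Rightarrow> bool" where
  "spanning_tree V ends F \<longleftrightarrow>
     (\<forall>x\<in>V. \<forall>y\<in>V. (adj_in ends F)\<^sup>*\<^sup>* x y) \<and> card F = card V - 1"

text \<open>Cyclic base ordering: a bijection O from E onto {1..|E|} such that for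
  every i, the edges O^-1(i),...,O^-1(i+|V|-2) (indices cyclic mod |E|)
  induce a spanning tree.\<close>
definition is_CBO :: "'v set \<Rightarrow> 'e set \<Rightarrow> ('e \<Rightarrow> 'v set) \<Rightarrow> ('e \<Rightarrow> nat) \<Rightarrow> bool" where
  "is_CBO V E ends ord \<longleftrightarrow>
     bij_betw ord E {1..card E} \<and>
     (\<forall>i\<in>{1..card E}.
        spanning_tree V ends
          {e\<in>E. (int (ord e) - int i) mod int (card E) < int (card V) - 1})"

definition cyclically_orderable :: "'v set \<Rightarrow> 'e set \<Rightarrow> ('e \<Rightarrow> 'v set) \<Rightarrow> bool" where
  "cyclically_orderable V E ends \<longleftrightarrow> (\<exists>ord. is_CBO V E ends ord)"

text \<open>Generalized theta graph with path lengths ls!0,...,ls!(k-1):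
  terminals TU, TW; internal vertex TI i j (1 <= j < ls!i) is the j-th vertex on
  path i; edge (i,j) (j < ls!i) joins the j-th and (j+1)-th vertex of path i.\<close>
datatype tvert = TU | TW | TI nat nat

definition theta_V :: "nat list \<Rightarrow> tvert set" where
  "theta_V ls = {TU, TW} \<union> {TI i j | i j. i < length ls \<and> 1 \<le> j \<and> j < ls ! i}"

definition theta_E :: "nat list \<Rightarrow> (nat \<times> nat) set" where
  "theta_E ls = {(i, j) | i j. i < length ls \<and> j < ls ! i}"

definition theta_pos :: "nat list \<Rightarrow> nat \<Rightarrow> nat \<Rightarrow> tvert" where
  "theta_pos ls i j = (if j = 0 then TU else if j = ls ! i then TW else TI i j)"

definition theta_ends :: "nat list \<Rightarrow> nat \<times> nat \<Rightarrow> tvert set" where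
  "theta_ends ls e = {theta_pos ls (fst e) (snd e), theta_pos ls (fst e) (snd e + 1)}"

end

theory Submission
  imports Defs
begin

lemma path_lemma:
  assumes st: "spanning_tree (theta_V ls) (theta_ends ls) F"
    and FE: "F \<subseteq> theta_E ls"
    and ia: "(i,a) \<in> theta_E ls" "(i,a) \<notin> F"
    and ib: "(i,b) \<in> theta_E ls" "(i,b) \<notin> F"
    and ab: "a < b"
  shows False
proof -
  let ?S = "{TI i j | j. a < j \<and> j \<le> b}"
  have bl: "b < ls ! i" and il: "i < length ls" using ib by (auto simp: theta_E_def)
  have clos: "y \<in> ?S" if "(adj_in (theta_ends ls) F)\<^sup>*\<^sup>* x y" "x \<in> ?S" for x y
    using that
  proof (induction rule: rtranclp_induct)
    case base then show ?case by simp
  next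
    case (step y z)
    from step.IH step.prems obtain j where y: "y = TI i j" "a < j" "j \<le> b" by auto
    from step.hyps(2) obtain i' j' where e: "(i',j') \<in> F"
      and en: "theta_ends ls (i',j') = {y, z}" unfolding adj_in_def by auto
    have eE: "i' < length ls" "j' < ls ! i'" using e FE by (auto simp: theta_E_def)
    have en2: "{theta_pos ls i' j', theta_pos ls i' (j'+1)} = {y,z}"
      using en by (simp add: theta_ends_def)
    show ?case
    proof (cases "y = theta_pos ls i' j'")
      case True
      then have "j' \<noteq> 0" "j' \<noteq> ls ! i'" "TI i' j' = TI i j" using y
        by (auto simp: theta_pos_def split: if_splits)
      then have ij: "i' = i" "j' = j" by auto
      have "j \<noteq> b" using e ib ij by auto
      then have jb: "j < b" using y by auto
      have "z = y \<or> z = theta_pos ls i' (j'+1)" using en2 True by (auto simp: doubleton_eq_iff)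
      moreover have "theta_pos ls i' (j'+1) = TI i (j+1)" using ij jb bl
        by (auto simp: theta_pos_def)
      ultimately show ?thesis using y jb step.prems by auto
    next
      case False
      then have yy: "y = theta_pos ls i' (j'+1)" using en2 by (auto simp: doubleton_eq_iff)
      then have "j'+1 \<noteq> ls ! i'" "TI i' (j'+1) = TI i j" using y
        by (auto simp: theta_pos_def split: if_splits)
      then have ij: "i' = i" "j' + 1 = j" by auto
      have "j' \<noteq> a" using e ia ij by auto
      then have ja: "a < j'" using y ij by auto
      have "z = y \<or> z = theta_pos ls i' j'" using en2 yy by (auto simp: doubleton_eq_iff)
      moreover have "theta_pos ls i' j' = TI i j'" using ij ja eE
        by (auto simp: theta_pos_def)
      ultimately show ?thesis using y ja ij step.prems by auto
    qed
  qed
  have "TI i (a+1) \<in> theta_V ls" "TU \<in> theta_V ls" using ab bl il by (auto simp: theta_V_def)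
  then have "(adj_in (theta_ends ls) F)\<^sup>*\<^sup>* (TI i (a+1)) TU"
    using st unfolding spanning_tree_def by blast
  from clos[OF this] ab show False by auto
qed

lemma inj_compl:
  assumes st: "spanning_tree (theta_V ls) (theta_ends ls) F"
    and FE: "F \<subseteq> theta_E ls"
  shows "inj_on fst (theta_E ls - F)"
proof (rule inj_onI)
  fix x y assume x: "x \<in> theta_E ls - F" and y: "y \<in> theta_E ls - F" and f: "fst x = fst y"
  obtain i a where xa: "x = (i,a)" by (cases x)
  obtain b where yb: "y = (i,b)" using f xa by (cases y) auto
  show "x = y"
  proof (cases a b rule: linorder_cases)
    case less then show ?thesis using path_lemma[OF st FE, of i a b] x y xa yb by auto
  next
    case greater then show ?thesis using path_lemma[OF st FE, of i b a] x y xa yb by auto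
  qed (simp add: xa yb)
qed

lemma count_window:
  fixes o' m q :: nat
  assumes o: "o' \<in> {1..m}" and q: "q \<le> m"
  shows "card {i\<in>{1..m}. (int o' - int i) mod int m < int q} = q"
proof -
  define g where "g i = nat ((int o' - int i) mod int m)" for i
  have mpos: "m > 0" using o by auto
  have inj: "inj_on g {1..m}"
  proof (rule inj_onI)
    fix i j assume i: "i \<in> {1..m}" and j: "j \<in> {1..m}" and gg: "g i = g j"
    have "(int o' - int i) mod int m = (int o' - int j) mod int m"
      using gg mpos unfolding g_def by (simp add: nat_eq_iff2)
    then have "int m dvd (int o' - int i) - (int o' - int j)" by (simp add: mod_eq_dvd_iff)
    then have d: "int m dvd int j - int i" by simp
    have "\<bar>int j - int i\<bar> < int m" using i j by auto
    then have "int j - int i = 0" using d dvd_imp_le_int[of "int j - int i" "int m"] by force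
    then show "i = j" by simp
  qed
  have sub: "g ` {1..m} \<subseteq> {0..<m}" using mpos by (auto simp: g_def nat_less_iff)
  have img: "g ` {1..m} = {0..<m}"
    using card_subset_eq[OF _ sub] card_image[OF inj] by simp
  have eq: "{i\<in>{1..m}. (int o' - int i) mod int m < int q} = {i\<in>{1..m}. g i < q}"
    using mpos by (auto simp: g_def nat_less_iff)
  have "g ` {i\<in>{1..m}. g i < q} = {0..<q}"
  proof
    show "g ` {i\<in>{1..m}. g i < q} \<subseteq> {0..<q}" by auto
    show "{0..<q} \<subseteq> g ` {i\<in>{1..m}. g i < q}"
    proof
      fix x assume x: "x \<in> {0..<q}"
      then have "x \<in> g ` {1..m}" using img q by simp
      then obtain i where "i \<in> {1..m}" "x = g i" by blast
      then show "x \<in> g ` {i\<in>{1..m}. g i < q}" using x by auto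
    qed
  qed
  moreover have "inj_on g {i\<in>{1..m}. g i < q}" using inj by (rule inj_on_subset) auto
  ultimately have "card {i\<in>{1..m}. g i < q} = q"
    by (metis card_atLeastLessThan card_image diff_zero)
  then show ?thesis using eq by simp
qed

lemma double_count:
  assumes "finite A" "finite B"
  shows "(\<Sum>a\<in>A. card {b\<in>B. P a b}) = (\<Sum>b\<in>B. card {a\<in>A. P a b})"
proof -
  have cs: "card {x\<in>X. Q x} = (\<Sum>x\<in>X. if Q x then 1 else 0)" if "finite X" for X and Q :: "'z \<Rightarrow> bool"
    using sum.inter_filter[OF that, of "\<lambda>_. 1::nat" Q] by simp
  have "(\<Sum>a\<in>A. card {b\<in>B. P a b}) = (\<Sum>a\<in>A. \<Sum>b\<in>B. if P a b then 1 else 0)"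
    by (rule sum.cong[OF refl], rule cs[OF assms(2)])
  also have "\<dots> = (\<Sum>b\<in>B. \<Sum>a\<in>A. if P a b then 1 else 0)" by (rule sum.swap)
  also have "\<dots> = (\<Sum>b\<in>B. card {a\<in>A. P a b})"
    by (rule sum.cong[OF refl], rule cs[OF assms(1), symmetric])
  finally show ?thesis .
qed

lemma card_E: "card (theta_E ls) = (\<Sum>i<length ls. ls ! i)"
proof -
  have "theta_E ls = (SIGMA i:{..<length ls}. {..<ls ! i})" by (auto simp: theta_E_def)
  then show ?thesis by (simp add: card_SigmaI)
qed

lemma card_H: assumes "t \<le> length ls"
  shows "card {e \<in> theta_E ls. fst e < t} = (\<Sum>i<t. ls ! i)"
proof -
  have "{e \<in> theta_E ls. fst e < t} = (SIGMA i:{..<t}. {..<ls ! i})" using assms by (auto simp: theta_E_def)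
  then show ?thesis by (simp add: card_SigmaI)
qed

lemma card_V: assumes "\<forall>i<length ls. ls ! i \<ge> 1"
  shows "card (theta_V ls) + length ls = (\<Sum>i<length ls. ls ! i) + 2"
proof -
  have V: "theta_V ls = {TU, TW} \<union> (\<Union>i\<in>{..<length ls}. TI i ` {1..<ls ! i})"
    by (auto simp: theta_V_def)
  have c1: "card (\<Union>i\<in>{..<length ls}. TI i ` {1..<ls ! i}) = (\<Sum>i<length ls. ls ! i - 1)"
  proof -
    have "card (\<Union>i\<in>{..<length ls}. TI i ` {1..<ls ! i}) = (\<Sum>i<length ls. card (TI i ` {1..<ls ! i}))"
      by (rule card_UN_disjoint) auto
    also have "\<dots> = (\<Sum>i<length ls. ls ! i - 1)"
      by (rule sum.cong[OF refl]) (simp add: card_image inj_on_def)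
    finally show ?thesis .
  qed
  have "card (theta_V ls) = 2 + (\<Sum>i<length ls. ls ! i - 1)"
    unfolding V using c1 by (subst card_Un_disjoint) auto
  moreover have "(\<Sum>i<length ls. ls ! i - 1) + length ls = (\<Sum>i<length ls. ls ! i)"
  proof -
    have "(\<Sum>i<length ls. ls ! i - 1) + length ls = (\<Sum>i<length ls. ls ! i - 1 + 1)"
      by (simp only: sum.distrib) simp
    also have "\<dots> = (\<Sum>i<length ls. ls ! i)" using assms by (intro sum.cong) auto
    finally show ?thesis .
  qed
  ultimately show ?thesis by simp
qed

theorem mainTheorem8:
  fixes ls :: "nat list"
  assumes "length ls \<ge> 2"
    and "\<forall>i<length ls. ls ! i \<ge> 1"
    and "sorted ls"
    and "cyclically_orderable (theta_V ls) (theta_E ls) (theta_ends ls)"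
  shows "\<forall>t. 2 \<le> t \<and> t \<le> length ls \<longrightarrow>
           real (\<Sum>i<t. ls ! i) / real (t - 1)
             \<ge> real (\<Sum>i<length ls. ls ! i) / real (length ls - 1)"
proof (intro allI impI)
  fix t assume t: "2 \<le> t \<and> t \<le> length ls"
  define k where "k = length ls"
  define L where "L = (\<Sum>i<length ls. ls ! i)"
  define S where "S = (\<Sum>i<t. ls ! i)"
  define E where "E = theta_E ls"
  define V where "V = theta_V ls"
  define m where "m = card E"
  define n where "n = card V"
  obtain ord where cbo: "is_CBO V E (theta_ends ls) ord"
    using assms(4) unfolding cyclically_orderable_def V_def E_def by blast
  have mL: "m = L" unfolding m_def E_def L_def by (rule card_E)
  have nk: "n + k = L + 2" unfolding n_def V_def k_def L_def using card_V[OF assms(2)] by simp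
  have kL: "k \<le> L"
  proof -
    have "(\<Sum>i<length ls. (1::nat)) \<le> L" unfolding L_def using assms(2) by (intro sum_mono) auto
    then show ?thesis by (simp add: k_def)
  qed
  have finE: "finite E"
  proof -
    have "E = (SIGMA i:{..<length ls}. {..<ls ! i})" by (auto simp: theta_E_def E_def)
    then show ?thesis by simp
  qed
  define F where "F i = {e\<in>E. (int (ord e) - int i) mod int m < int n - 1}" for i
  define H where "H = {e\<in>E. fst e < t}"
  have cardH: "card H = S" unfolding H_def E_def S_def using t by (intro card_H) auto
  have finH: "finite H" unfolding H_def using finE by simp
  have bij: "bij_betw ord E {1..m}" using cbo unfolding is_CBO_def m_def by blast
  have stF: "spanning_tree V (theta_ends ls) (F i)" if "i \<in> {1..m}" for i
    using cbo that unfolding is_CBO_def F_def m_def n_def by blast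
  have FE: "F i \<subseteq> E" for i unfolding F_def by auto
  have lower: "t - 1 \<le> card ((E - F i) \<inter> H)" if i: "i \<in> {1..m}" for i
  proof -
    define C where "C = E - F i"
    have cF: "card (F i) = n - 1" using stF[OF i] unfolding spanning_tree_def n_def by blast
    have cC: "card C = k - 1" unfolding C_def using card_Diff_subset[OF finite_subset[OF FE finE] FE] cF
      mL nk kL unfolding m_def by simp
    have inj: "inj_on fst C" unfolding C_def E_def
      using inj_compl[of ls "F i"] stF[OF i] FE unfolding V_def E_def by blast
    have finC: "finite C" unfolding C_def using finE by simp
    have sub: "fst ` C \<subseteq> fst ` (C \<inter> H) \<union> {t..<k}"
    proof
      fix x assume "x \<in> fst ` C"
      then obtain e where e: "e \<in> C" "x = fst e" by blast
      have "fst e < k" using e unfolding C_def E_def k_def theta_E_def by auto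
      show "x \<in> fst ` (C \<inter> H) \<union> {t..<k}"
      proof (cases "fst e < t")
        case True
        then have "e \<in> C \<inter> H" using e unfolding H_def C_def by blast
        then show ?thesis using e by blast
      next
        case False then show ?thesis using e \<open>fst e < k\<close> by simp
      qed
    qed
    have "card (fst ` C) \<le> card (fst ` (C \<inter> H) \<union> {t..<k})"
      by (rule card_mono[OF _ sub]) (use finC in simp)
    also have "\<dots> \<le> card (fst ` (C \<inter> H)) + card {t..<k}" by (rule card_Un_le)
    also have "card (fst ` (C \<inter> H)) = card (C \<inter> H)"
      by (rule card_image) (rule inj_on_subset[OF inj], auto)
    finally have "k - 1 \<le> card (C \<inter> H) + (k - t)" using card_image[OF inj] cC by simp
    then show ?thesis unfolding C_def using t k_def by linarith
  qed
  have "(\<Sum>i\<in>{1..m}. t - 1) \<le> (\<Sum>i\<in>{1..m}. card ((E - F i) \<inter> H))"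
    by (rule sum_mono) (rule lower)
  also have "(\<Sum>i\<in>{1..m}. card ((E - F i) \<inter> H)) = (\<Sum>i\<in>{1..m}. card {e\<in>H. e \<notin> F i})"
    by (rule sum.cong[OF refl], rule arg_cong[where f=card]) (auto simp: H_def)
  also have "\<dots> = (\<Sum>e\<in>H. card {i\<in>{1..m}. e \<notin> F i})"
    by (rule double_count) (use finH in auto)
  also have "\<dots> = (\<Sum>e\<in>H. k - 1)"
  proof (rule sum.cong[OF refl])
    fix e assume e: "e \<in> H"
    then have eE: "e \<in> E" unfolding H_def by simp
    have oe: "ord e \<in> {1..m}" using bij eE by (auto simp: bij_betw_def)
    have n1: "int n - 1 = int (n - 1)" using nk kL by linarith
    have cin: "card {i\<in>{1..m}. e \<in> F i} = n - 1"
    proof -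
      have "{i\<in>{1..m}. e \<in> F i} = {i\<in>{1..m}. (int (ord e) - int i) mod int m < int (n - 1)}"
        using eE unfolding F_def n1 by simp
      also have "card \<dots> = n - 1" by (rule count_window[OF oe]) (use mL nk kL assms(1) k_def in linarith)
      finally show ?thesis .
    qed
    have X: "{i\<in>{1..m}. e \<in> F i} \<subseteq> {1..m}" by blast
    have "{i\<in>{1..m}. e \<notin> F i} = {1..m} - {i\<in>{1..m}. e \<in> F i}" by blast
    also have "card \<dots> = card {1..m} - card {i\<in>{1..m}. e \<in> F i}"
      by (rule card_Diff_subset[OF finite_subset[OF X finite_atLeastAtMost] X])
    also have "\<dots> = m - (n - 1)" by (simp only: cin card_atLeastAtMost diff_Suc_1)
    finally have "card {i\<in>{1..m}. e \<notin> F i} = m - (n - 1)" .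
    then show "card {i\<in>{1..m}. e \<notin> F i} = k - 1" using mL nk kL by simp
  qed
  finally have ineq: "m * (t - 1) \<le> S * (k - 1)" using cardH by (simp add: mult.commute)
  then have "real L * real (t - 1) \<le> real S * real (k - 1)"
    using mL by (metis of_nat_mult of_nat_le_iff)
  moreover have p1: "real (t - 1) > 0" and p2: "real (k - 1) > 0" using t k_def by auto
  ultimately have "real L \<le> real S * real (k - 1) / real (t - 1)"
    by (simp only: pos_le_divide_eq[OF p1])
  then have "real L / real (k - 1) \<le> real S * real (k - 1) / real (t - 1) / real (k - 1)"
    using p2 by (rule divide_right_mono[OF _ less_imp_le])
  also have "\<dots> = real S / real (t - 1)" using p2 by simp
  finally show "real L / real (length ls - 1) \<le> real S / real (t - 1)"
    unfolding k_def .
qed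

end
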